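(* For every positive integer $t$ and every finite graph $G$ of cliquewidth at most $t$, the hypergraph of balls in $G$ has a proper array sample compression scheme of size $4t+3$.
   Context: For a hypergraph $H$ (finite $V(H)$, $E(H)\subseteq 2^{V(H)}$): a sample is a pair $(X^+,X^-)$ of subsets of $V(H)$ such that some hyperedge $e$ has $X^+\subseteq e$, $X^-\cap e=\emptyset$; $\mathcal{S}(H)$ is the set of samples; $S$ realizes $(X^+,X^-)$ if $X^+\subseteq S$ and $S\cap X^-=\emptyset$. With a fresh symbol $\bot\notin V(H)$, an array sample compression scheme of size $k$ is a pair $(\kappa,\rho)$, $\kappa:\mathcal{S}(H)\to(V(H)\cup\{\bot\})^k$, $\rho:(V(H)\cup\{\bot\})^k\to 2^{V(H)}$, such that for every sample, $\kappa(X^+,X^-)\in(X^+\cup X^-\cup\{\bot\})^k$ and $\rho(\kappa(X^+,X^-))$ realizes $(X^+,X^-)$; it is proper if all values of $\rho$ are hyperedges. The hypergraph of balls in $G$ has vertex set $V(G)$ and hyperedges all $B_G(c,r)=\{v:\mathrm{dist}_G(c,v)\le r\}$, $c\in V(G)$, $r$ an integer. The cliquewidth of $G$ is the minimum $k$ such that $G$ can be built with labels in $[k]$ using: creation of a single labeled vertex; disjoint union; for labels $i\ne j$, adding all edges between label-$i$ and label-$j$ vertices; relabeling label $i$ to $j$. *)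

theory Defs
  imports Main
begin

definition finite_graph :: "'a set \<Rightarrow> ('a \<times> 'a) set \<Rightarrow> bool" where
  "finite_graph V E \<longleftrightarrow> finite V \<and> V \<noteq> {} \<and> E \<subseteq> V \<times> V \<and> sym E \<and> irrefl E"

definition realizes :: "'a set \<Rightarrow> 'a set \<times> 'a set \<Rightarrow> bool" where
  "realizes S X \<longleftrightarrow> fst X \<subseteq> S \<and> S \<inter> snd X = {}"

definition samples :: "'a set \<Rightarrow> 'a set set \<Rightarrow> ('a set \<times> 'a set) set" where
  "samples V Es = {(Xp, Xm). Xp \<subseteq> V \<and> Xm \<subseteq> V \<and> (\<exists>e\<in>Es. Xp \<subseteq> e \<and> Xm \<inter> e = {})}"

(* Arrays of length k over V \<union> {\<bottom>}: lists of length k over 'a option, None playing \<bottom>. *)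
definition arrays :: "nat \<Rightarrow> 'a set \<Rightarrow> 'a option list set" where
  "arrays k A = {a. length a = k \<and> set a \<subseteq> Some ` A \<union> {None}}"

definition array_sample_compression_scheme ::
  "'a set \<Rightarrow> 'a set set \<Rightarrow> nat \<Rightarrow> ('a set \<times> 'a set \<Rightarrow> 'a option list) \<Rightarrow> ('a option list \<Rightarrow> 'a set) \<Rightarrow> bool" where
  "array_sample_compression_scheme V Es k \<kappa> \<rho> \<longleftrightarrow>
     (\<forall>a\<in>arrays k V. \<rho> a \<subseteq> V) \<and>
     (\<forall>X\<in>samples V Es. \<kappa> X \<in> arrays k (fst X \<union> snd X) \<and> realizes (\<rho> (\<kappa> X)) X)"

definition proper_array_sample_compression_scheme ::
  "'a set \<Rightarrow> 'a set set \<Rightarrow> nat \<Rightarrow> ('a set \<times> 'a set \<Rightarrow> 'a option list) \<Rightarrow> ('a option list \<Rightarrow> 'a set) \<Rightarrow> bool" where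
  "proper_array_sample_compression_scheme V Es k \<kappa> \<rho> \<longleftrightarrow>
     array_sample_compression_scheme V Es k \<kappa> \<rho> \<and> (\<forall>a\<in>arrays k V. \<rho> a \<in> Es)"

definition ball :: "'a set \<Rightarrow> ('a \<times> 'a) set \<Rightarrow> 'a \<Rightarrow> int \<Rightarrow> 'a set" where
  "ball V E c r = {v\<in>V. r \<ge> 0 \<and> (\<exists>k\<le>nat r. (c, v) \<in> E ^^ k)}"

definition ball_hyperedges :: "'a set \<Rightarrow> ('a \<times> 'a) set \<Rightarrow> 'a set set" where
  "ball_hyperedges V E = {ball V E c r | c r. c \<in> V}"

inductive cw_build :: "nat \<Rightarrow> 'a set \<Rightarrow> ('a \<times> 'a) set \<Rightarrow> ('a \<Rightarrow> nat) \<Rightarrow> bool" for k where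
  create: "i \<in> {1..k} \<Longrightarrow> cw_build k {v} {} (\<lambda>_. i)"
| union: "cw_build k V1 E1 l1 \<Longrightarrow> cw_build k V2 E2 l2 \<Longrightarrow> V1 \<inter> V2 = {} \<Longrightarrow>
          cw_build k (V1 \<union> V2) (E1 \<union> E2) (\<lambda>x. if x \<in> V1 then l1 x else l2 x)"
| join: "cw_build k V E l \<Longrightarrow> i \<in> {1..k} \<Longrightarrow> j \<in> {1..k} \<Longrightarrow> i \<noteq> j \<Longrightarrow>
          cw_build k V (E \<union> {(x, y). x \<in> V \<and> y \<in> V \<and> ((l x = i \<and> l y = j) \<or> (l x = j \<and> l y = i))}) l"
| relabel: "cw_build k V E l \<Longrightarrow> i \<in> {1..k} \<Longrightarrow> j \<in> {1..k} \<Longrightarrow>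
          cw_build k V E (\<lambda>x. if l x = i then j else l x)"

definition cliquewidth :: "'a set \<Rightarrow> ('a \<times> 'a) set \<Rightarrow> nat" where
  "cliquewidth V E = (LEAST k. \<exists>l. cw_build k V E l)"

end

theory Submission
  imports Defs "HOL-Library.Extended_Nat"
begin


definition gdist :: "('a \<times> 'a) set \<Rightarrow> 'a \<Rightarrow> 'a \<Rightarrow> enat" where
  "gdist E u v = (if \<exists>n. (u,v) \<in> E ^^ n then enat (LEAST n. (u,v) \<in> E ^^ n) else \<infinity>)"

definition Fd :: "('a \<times> 'a) set \<Rightarrow> 'a set \<Rightarrow> 'a \<Rightarrow> enat" where
  "Fd E S c = (INF a\<in>S. gdist E c a)"

definition Gd :: "('a \<times> 'a) set \<Rightarrow> 'a set \<Rightarrow> 'a \<Rightarrow> enat" where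
  "Gd E S w = (INF b\<in>S. gdist E b w)"

lemma gdist_le: "(u,v) \<in> E ^^ n \<Longrightarrow> gdist E u v \<le> enat n"
  unfolding gdist_def by (auto intro: Least_le)

lemma gdist_fin: "gdist E u v \<noteq> \<infinity> \<Longrightarrow> \<exists>n. (u,v) \<in> E ^^ n \<and> gdist E u v = enat n"
  unfolding gdist_def by (auto split: if_splits intro: LeastI)

lemma gdist_le_iff: "gdist E u v \<le> enat m \<longleftrightarrow> (\<exists>n\<le>m. (u,v) \<in> E ^^ n)"
proof
  assume "gdist E u v \<le> enat m"
  then have "gdist E u v \<noteq> \<infinity>" by (cases "gdist E u v") auto
  from gdist_fin[OF this] obtain n where n: "(u,v) \<in> E ^^ n" "gdist E u v = enat n" by blast
  have "n \<le> m" using n(2) \<open>gdist E u v \<le> enat m\<close> by simp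
  with n(1) show "\<exists>n\<le>m. (u,v) \<in> E ^^ n" by blast
next
  assume "\<exists>n\<le>m. (u,v) \<in> E ^^ n"
  then obtain n where "n \<le> m" "(u,v) \<in> E ^^ n" by blast
  then show "gdist E u v \<le> enat m" using gdist_le[OF \<open>(u,v) \<in> E ^^ n\<close>] by (meson enat_ord_simps(1) order_trans)
qed

lemma gdist_refl: "gdist E u u = 0"
proof -
  have "gdist E u u \<le> enat 0" by (rule gdist_le) simp
  then show ?thesis by (metis ile0_eq zero_enat_def)
qed

lemma ball_mem: "v \<in> ball V E c r \<longleftrightarrow> v \<in> V \<and> 0 \<le> r \<and> gdist E c v \<le> enat (nat r)"
  unfolding ball_def by (auto simp: gdist_le_iff)

lemma INF_attain_enat:
  fixes f :: "'b \<Rightarrow> enat"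
  assumes "S \<noteq> {}" shows "\<exists>a\<in>S. (INF x\<in>S. f x) = f a"
proof -
  have "f ` S \<noteq> {}" using assms by auto
  then have "(LEAST x. x \<in> f ` S) \<in> f ` S" by (metis LeastI ex_in_conv)
  then show ?thesis unfolding Inf_enat_def using \<open>f ` S \<noteq> {}\<close> by auto
qed

lemma upper:
  assumes "\<forall>a\<in>A. \<forall>b\<in>B. (a,b) \<in> E"
  shows "gdist E c w \<le> Fd E A c + 1 + Gd E B w"
proof (cases "A = {} \<or> B = {}")
  case True
  then show ?thesis unfolding Fd_def Gd_def by (auto simp: top_enat_def)
next
  case False
  then obtain a b where a: "a \<in> A" "Fd E A c = gdist E c a" and b: "b \<in> B" "Gd E B w = gdist E b w"
    unfolding Fd_def Gd_def using INF_attain_enat by metis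
  show ?thesis
  proof (cases "gdist E c a = \<infinity> \<or> gdist E b w = \<infinity>")
    case True then show ?thesis using a b by auto
  next
    case False
    then obtain n1 n2 where n1: "(c,a) \<in> E ^^ n1" "gdist E c a = enat n1"
      and n2: "(b,w) \<in> E ^^ n2" "gdist E b w = enat n2" using gdist_fin by metis
    have "(c,b) \<in> E ^^ Suc n1" using n1(1) assms a(1) b(1) by auto
    then have "(c,w) \<in> E ^^ (Suc n1 + n2)" using n2(1) relpow_add by blast
    then have "gdist E c w \<le> enat (Suc n1 + n2)" by (rule gdist_le)
    also have "enat (Suc n1 + n2) = Fd E A c + 1 + Gd E B w"
      using a b n1 n2 by (simp add: one_enat_def)
    finally show ?thesis .
  qed
qed

lemma crossing:
  assumes "(c,w) \<in> E ^^ n" "c \<in> Z" "w \<notin> Z"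
  shows "\<exists>n1 n2 z y. (c,z) \<in> E ^^ n1 \<and> (z,y) \<in> E \<and> z \<in> Z \<and> y \<notin> Z \<and> (y,w) \<in> E ^^ n2 \<and> n1 + 1 + n2 = n"
  using assms
proof (induction n arbitrary: w)
  case 0
  then show ?case by auto
next
  case (Suc n)
  then obtain m where m: "(c,m) \<in> E ^^ n" "(m,w) \<in> E" by auto
  show ?case
  proof (cases "m \<in> Z")
    case True
    have "(c,m) \<in> E ^^ n \<and> (m,w) \<in> E \<and> m \<in> Z \<and> w \<notin> Z \<and> (w,w) \<in> E ^^ 0 \<and> n + 1 + 0 = Suc n"
      using m True Suc.prems(3) by simp
    then show ?thesis by blast
  next
    case False
    then obtain n1 n2 z y where h: "(c,z) \<in> E ^^ n1" "(z,y) \<in> E" "z \<in> Z" "y \<notin> Z" "(y,m) \<in> E ^^ n2" "n1 + 1 + n2 = n"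
      using Suc.IH[OF m(1) Suc.prems(2)] by blast
    have yw: "(y,w) \<in> E ^^ Suc n2" using h(5) m(2) by (rule relpow_Suc_I)
    have eq: "n1 + 1 + Suc n2 = Suc n" using h(6) by simp
    show ?thesis
      apply (rule exI[where x=n1])
      apply (rule exI[where x="Suc n2"])
      apply (rule exI[where x=z])
      apply (rule exI[where x=y])
      using h(1-4) yw eq by blast
  qed
qed

lemma lower:
  fixes bq :: "nat \<Rightarrow> 'a set \<times> 'a set"
  assumes "c \<in> Z" "w \<notin> Z" "gdist E c w \<noteq> \<infinity>"
    and cov: "\<forall>z\<in>Z. \<forall>y. y \<notin> Z \<longrightarrow> (z,y) \<in> E \<longrightarrow> (\<exists>k<m. z \<in> fst (bq k) \<and> y \<in> snd (bq k))"
  shows "\<exists>k<m. Fd E (fst (bq k)) c + 1 + Gd E (snd (bq k)) w \<le> gdist E c w"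
proof -
  from gdist_fin[OF assms(3)] obtain n where n: "(c,w) \<in> E ^^ n" "gdist E c w = enat n" by blast
  obtain n1 n2 z y where h: "(c,z) \<in> E ^^ n1" "(z,y) \<in> E" "z \<in> Z" "y \<notin> Z" "(y,w) \<in> E ^^ n2" "n1 + 1 + n2 = n"
    using crossing[OF n(1) assms(1,2)] by blast
  have "\<exists>k<m. z \<in> fst (bq k) \<and> y \<in> snd (bq k)" using bspec[OF cov h(3)] h(2,4) by simp
  then obtain k where k: "k < m" "z \<in> fst (bq k)" "y \<in> snd (bq k)" by blast
  have "Fd E (fst (bq k)) c \<le> gdist E c z"
    unfolding Fd_def using k(2) by (rule INF_lower)
  also have "\<dots> \<le> enat n1" using h(1) by (rule gdist_le)
  finally have f1: "Fd E (fst (bq k)) c \<le> enat n1" .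
  have "Gd E (snd (bq k)) w \<le> gdist E y w"
    unfolding Gd_def using k(3) by (rule INF_lower)
  also have "\<dots> \<le> enat n2" using h(5) by (rule gdist_le)
  finally have f2: "Gd E (snd (bq k)) w \<le> enat n2" .
  have "Fd E (fst (bq k)) c + 1 + Gd E (snd (bq k)) w \<le> enat n1 + 1 + enat n2"
    using f1 f2 by (intro add_mono order_refl)
  also have "\<dots> = gdist E c w" using n h(6) by (simp add: one_enat_def)
  finally show ?thesis using k(1) by blast
qed



definition laminar :: "'a set set \<Rightarrow> bool" where
  "laminar NN \<longleftrightarrow> (\<forall>N\<in>NN. \<forall>M\<in>NN. N \<subseteq> M \<or> M \<subseteq> N \<or> N \<inter> M = {})"

definition binary :: "'a set set \<Rightarrow> bool" where
  "binary NN \<longleftrightarrow> (\<forall>N\<in>NN. 2 \<le> card N \<longrightarrow>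
     (\<exists>N1\<in>NN. \<exists>N2\<in>NN. N1 \<noteq> {} \<and> N2 \<noteq> {} \<and> N1 \<inter> N2 = {} \<and> N = N1 \<union> N2))"

definition twinlab :: "'a set \<Rightarrow> ('a \<times> 'a) set \<Rightarrow> 'a set \<Rightarrow> ('a \<Rightarrow> nat) \<Rightarrow> bool" where
  "twinlab V E N f \<longleftrightarrow> (\<forall>u\<in>N. \<forall>u'\<in>N. \<forall>w\<in>V-N. f u = f u' \<longrightarrow> ((u,w)\<in>E \<longleftrightarrow> (u',w)\<in>E))"

definition goodfam :: "nat \<Rightarrow> 'a set \<Rightarrow> ('a \<times> 'a) set \<Rightarrow> ('a \<Rightarrow> nat) \<Rightarrow> 'a set set \<Rightarrow> ('a set \<Rightarrow> 'a \<Rightarrow> nat) \<Rightarrow> bool" where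
  "goodfam k V E l NN lab \<longleftrightarrow> NN \<subseteq> Pow V \<and> V \<in> NN \<and> (\<forall>v\<in>V. {v} \<in> NN) \<and> (\<forall>N\<in>NN. N \<noteq> {})
     \<and> laminar NN \<and> binary NN \<and>
     (\<forall>N\<in>NN. lab N ` N \<subseteq> {1..k} \<and> twinlab V E N (lab N) \<and> (\<forall>u\<in>N. \<forall>u'\<in>N. lab N u = lab N u' \<longrightarrow> l u = l u'))"

lemma goodfamD:
  assumes g: "goodfam k V E l NN lab"
  shows "NN \<subseteq> Pow V" "V \<in> NN" "\<forall>v\<in>V. {v} \<in> NN" "\<forall>N\<in>NN. N \<noteq> {}" "laminar NN" "binary NN"
    "\<forall>N\<in>NN. lab N ` N \<subseteq> {1..k} \<and> twinlab V E N (lab N) \<and> (\<forall>u\<in>N. \<forall>u'\<in>N. lab N u = lab N u' \<longrightarrow> l u = l u')"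
proof -
  note h = g[unfolded goodfam_def]
  show "NN \<subseteq> Pow V" using h[THEN conjunct1] .
  show "V \<in> NN" using h[THEN conjunct2, THEN conjunct1] .
  show "\<forall>v\<in>V. {v} \<in> NN" using h[THEN conjunct2, THEN conjunct2, THEN conjunct1] .
  show "\<forall>N\<in>NN. N \<noteq> {}" using h[THEN conjunct2, THEN conjunct2, THEN conjunct2, THEN conjunct1] .
  show "laminar NN" using h[THEN conjunct2, THEN conjunct2, THEN conjunct2, THEN conjunct2, THEN conjunct1] .
  show "binary NN" using h[THEN conjunct2, THEN conjunct2, THEN conjunct2, THEN conjunct2, THEN conjunct2, THEN conjunct1] .
  show "\<forall>N\<in>NN. lab N ` N \<subseteq> {1..k} \<and> twinlab V E N (lab N) \<and> (\<forall>u\<in>N. \<forall>u'\<in>N. lab N u = lab N u' \<longrightarrow> l u = l u')"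
    using h[THEN conjunct2, THEN conjunct2, THEN conjunct2, THEN conjunct2, THEN conjunct2, THEN conjunct2] .
qed

lemma cw_fam:
  assumes "cw_build k V E l"
  shows "V \<noteq> {} \<and> E \<subseteq> V \<times> V \<and> l ` V \<subseteq> {1..k} \<and> (\<exists>NN lab. goodfam k V E l NN lab)"
  using assms
proof (induction rule: cw_build.induct)
  case (create i v)
  have "goodfam k {v} {} (\<lambda>_. i) {{v}} (\<lambda>N x. i)"
    unfolding goodfam_def laminar_def binary_def twinlab_def using create by simp
  then show ?case using create by blast
next
  case (union V1 E1 l1 V2 E2 l2)
  from union.IH(1) obtain NN1 lab1 where g1: "goodfam k V1 E1 l1 NN1 lab1" by blast
  from union.IH(2) obtain NN2 lab2 where g2: "goodfam k V2 E2 l2 NN2 lab2" by blast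
  have V1ne: "V1 \<noteq> {}" and E1: "E1 \<subseteq> V1 \<times> V1" and L1: "l1 ` V1 \<subseteq> {1..k}"
    using union.IH(1) by blast+
  have V2ne: "V2 \<noteq> {}" and E2: "E2 \<subseteq> V2 \<times> V2" and L2: "l2 ` V2 \<subseteq> {1..k}"
    using union.IH(2) by blast+
  have disj: "V1 \<inter> V2 = {}" by fact
  define l' where "l' = (\<lambda>x. if x \<in> V1 then l1 x else l2 x)"
  define NN where "NN = NN1 \<union> NN2 \<union> {V1 \<union> V2}"
  define lab where "lab = (\<lambda>N. if N = V1 \<union> V2 then l' else if N \<subseteq> V1 then lab1 N else lab2 N)"
  have P1: "NN1 \<subseteq> Pow V1" and P2: "NN2 \<subseteq> Pow V2" using goodfamD[OF g1] goodfamD[OF g2] by simp_all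
  have ne1: "\<forall>N\<in>NN1. N \<noteq> {}" and ne2: "\<forall>N\<in>NN2. N \<noteq> {}" using goodfamD[OF g1] goodfamD[OF g2] by simp_all
  have lam1: "laminar NN1" and lam2: "laminar NN2" using goodfamD[OF g1] goodfamD[OF g2] by simp_all
  have bin1: "binary NN1" and bin2: "binary NN2" using goodfamD[OF g1] goodfamD[OF g2] by simp_all
  have lb1: "\<forall>N\<in>NN1. lab1 N ` N \<subseteq> {1..k} \<and> twinlab V1 E1 N (lab1 N) \<and> (\<forall>u\<in>N. \<forall>u'\<in>N. lab1 N u = lab1 N u' \<longrightarrow> l1 u = l1 u')"
    using goodfamD(7)[OF g1] .
  have lb2: "\<forall>N\<in>NN2. lab2 N ` N \<subseteq> {1..k} \<and> twinlab V2 E2 N (lab2 N) \<and> (\<forall>u\<in>N. \<forall>u'\<in>N. lab2 N u = lab2 N u' \<longrightarrow> l2 u = l2 u')"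
    using goodfamD(7)[OF g2] .
  have sub1: "N \<subseteq> V1" if "N \<in> NN1" for N using that P1 by blast
  have sub2: "N \<subseteq> V2" if "N \<in> NN2" for N using that P2 by blast
  have n1: "N \<noteq> V1 \<union> V2" if "N \<in> NN1" for N
  proof
    assume "N = V1 \<union> V2"
    then have "V2 \<subseteq> V1" using sub1[OF that] by simp
    then show False using V2ne disj by auto
  qed
  have n2: "N \<noteq> V1 \<union> V2" if "N \<in> NN2" for N
  proof
    assume "N = V1 \<union> V2"
    then have "V1 \<subseteq> V2" using sub2[OF that] by simp
    then show False using V1ne disj by auto
  qed
  have lab1eq: "lab N = lab1 N" if "N \<in> NN1" for N
    unfolding lab_def using n1[OF that] sub1[OF that] by simp
  have lab2eq: "lab N = lab2 N" if "N \<in> NN2" for N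
  proof -
    have "N \<noteq> {}" using ne2 that by blast
    then have "\<not> N \<subseteq> V1" using sub2[OF that] disj by auto
    then show ?thesis using n2[OF that] unfolding lab_def by simp
  qed
  have NNc: "K \<in> NN1 \<or> K \<in> NN2 \<or> K = V1 \<union> V2" if "K \<in> NN" for K
    using that unfolding NN_def by blast
  have subNN: "K \<subseteq> V1 \<union> V2" if "K \<in> NN" for K
    using NNc[OF that] sub1 sub2 by blast
  have lam: "laminar NN"
    unfolding laminar_def
  proof (intro ballI)
    fix N M assume N: "N \<in> NN" and M: "M \<in> NN"
    show "N \<subseteq> M \<or> M \<subseteq> N \<or> N \<inter> M = {}"
    proof (cases "N = V1 \<union> V2")
      case True
      then have "M \<subseteq> N" using subNN[OF M] by simp
      then show ?thesis by (intro disjI2 disjI1)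
    next
      case nt: False
      show ?thesis
      proof (cases "M = V1 \<union> V2")
        case True
        then have "N \<subseteq> M" using subNN[OF N] by simp
        then show ?thesis by (intro disjI1)
      next
        case mt: False
        have Nc: "N \<in> NN1 \<or> N \<in> NN2" using NNc[OF N] nt by blast
        have Mc: "M \<in> NN1 \<or> M \<in> NN2" using NNc[OF M] mt by blast
        show ?thesis
        proof (cases "N \<in> NN1")
          case N1: True
          show ?thesis
          proof (cases "M \<in> NN1")
            case True
            then show ?thesis using lam1 N1 unfolding laminar_def by blast
          next
            case False
            then have "M \<subseteq> V2" using Mc sub2 by blast
            moreover have "N \<subseteq> V1" using N1 sub1 by blast
            ultimately have "N \<inter> M = {}" using disj by blast
            then show ?thesis by (intro disjI2)
          qed
        next
          case N2: False
          then have N2: "N \<in> NN2" using Nc by blast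
          show ?thesis
          proof (cases "M \<in> NN2")
            case True
            then show ?thesis using lam2 N2 unfolding laminar_def by blast
          next
            case False
            then have "M \<subseteq> V1" using Mc sub1 by blast
            moreover have "N \<subseteq> V2" using N2 sub2 by blast
            ultimately have "N \<inter> M = {}" using disj by blast
            then show ?thesis by (intro disjI2)
          qed
        qed
      qed
    qed
  qed
  have V1NN: "V1 \<in> NN" and V2NN: "V2 \<in> NN" using goodfamD(2)[OF g1] goodfamD(2)[OF g2] unfolding NN_def by simp_all
  have bin: "binary NN"
    unfolding binary_def
  proof (intro ballI impI)
    fix N assume N: "N \<in> NN" and c: "2 \<le> card N"
    show "\<exists>N1\<in>NN. \<exists>N2\<in>NN. N1 \<noteq> {} \<and> N2 \<noteq> {} \<and> N1 \<inter> N2 = {} \<and> N = N1 \<union> N2"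
    proof (cases "N = V1 \<union> V2")
      case True
      show ?thesis
        apply (rule bexI[OF _ V1NN])
        apply (rule bexI[OF _ V2NN])
        using V1ne V2ne disj True by simp
    next
      case nt: False
      show ?thesis
      proof (cases "N \<in> NN1")
        case True
        have "\<exists>N1\<in>NN1. \<exists>N2\<in>NN1. N1 \<noteq> {} \<and> N2 \<noteq> {} \<and> N1 \<inter> N2 = {} \<and> N = N1 \<union> N2"
          using bin1 True c unfolding binary_def by simp
        then obtain N1 N2 where "N1 \<in> NN1" "N2 \<in> NN1" "N1 \<noteq> {} \<and> N2 \<noteq> {} \<and> N1 \<inter> N2 = {} \<and> N = N1 \<union> N2"
          by blast
        moreover then have "N1 \<in> NN" "N2 \<in> NN" unfolding NN_def by simp_all
        ultimately show ?thesis by blast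
      next
        case False
        then have N2: "N \<in> NN2" using NNc[OF N] nt by blast
        have "\<exists>N1\<in>NN2. \<exists>N2\<in>NN2. N1 \<noteq> {} \<and> N2 \<noteq> {} \<and> N1 \<inter> N2 = {} \<and> N = N1 \<union> N2"
          using bin2 N2 c unfolding binary_def by simp
        then obtain N1 N2 where "N1 \<in> NN2" "N2 \<in> NN2" "N1 \<noteq> {} \<and> N2 \<noteq> {} \<and> N1 \<inter> N2 = {} \<and> N = N1 \<union> N2"
          by blast
        moreover then have "N1 \<in> NN" "N2 \<in> NN" unfolding NN_def by simp_all
        ultimately show ?thesis by blast
      qed
    qed
  qed
  have labs: "\<forall>N\<in>NN. lab N ` N \<subseteq> {1..k} \<and> twinlab (V1 \<union> V2) (E1 \<union> E2) N (lab N) \<and> (\<forall>u\<in>N. \<forall>u'\<in>N. lab N u = lab N u' \<longrightarrow> l' u = l' u')"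
  proof
    fix N assume N: "N \<in> NN"
    { assume NV: "N = V1 \<union> V2"
      have "lab N = l'" using NV unfolding lab_def by simp
      moreover have "l' ` (V1 \<union> V2) \<subseteq> {1..k}" using L1 L2 unfolding l'_def by auto
      ultimately have "lab N ` N \<subseteq> {1..k} \<and> twinlab (V1 \<union> V2) (E1 \<union> E2) N (lab N) \<and> (\<forall>u\<in>N. \<forall>u'\<in>N. lab N u = lab N u' \<longrightarrow> l' u = l' u')"
        using NV unfolding twinlab_def by auto }
    moreover
    { assume N1: "N \<in> NN1"
      have NV1: "N \<subseteq> V1" using sub1[OF N1] .
      have "twinlab (V1 \<union> V2) (E1 \<union> E2) N (lab1 N)"
        unfolding twinlab_def
      proof (intro ballI impI)
        fix u u' w assume u: "u \<in> N" and u': "u' \<in> N" and w: "w \<in> V1 \<union> V2 - N" and eq: "lab1 N u = lab1 N u'"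
        have nE2: "(u,w) \<notin> E2" "(u',w) \<notin> E2" using u u' NV1 E2 disj by blast+
        show "(u,w) \<in> E1 \<union> E2 \<longleftrightarrow> (u',w) \<in> E1 \<union> E2"
        proof (cases "w \<in> V1")
          case True
          then have "(u,w) \<in> E1 \<longleftrightarrow> (u',w) \<in> E1" using lb1 N1 u u' eq w unfolding twinlab_def by blast
          then show ?thesis using nE2 by blast
        next
          case False
          then have "(u,w) \<notin> E1" "(u',w) \<notin> E1" using E1 by blast+
          then show ?thesis using nE2 by blast
        qed
      qed
      moreover have "\<forall>u\<in>N. \<forall>u'\<in>N. lab1 N u = lab1 N u' \<longrightarrow> l' u = l' u'"
      proof (intro ballI impI)
        fix u u' assume u: "u \<in> N" and u': "u' \<in> N" and eq: "lab1 N u = lab1 N u'"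
        have "l1 u = l1 u'" using bspec[OF lb1 N1] u u' eq by blast
        moreover have "u \<in> V1" "u' \<in> V1" using u u' NV1 by auto
        ultimately show "l' u = l' u'" unfolding l'_def using disj by auto
      qed
      ultimately have "lab N ` N \<subseteq> {1..k} \<and> twinlab (V1 \<union> V2) (E1 \<union> E2) N (lab N) \<and> (\<forall>u\<in>N. \<forall>u'\<in>N. lab N u = lab N u' \<longrightarrow> l' u = l' u')"
        unfolding lab1eq[OF N1] using bspec[OF lb1 N1] by (intro conjI) (elim conjE; assumption)+ }
    moreover
    { assume N2: "N \<in> NN2"
      have NV2: "N \<subseteq> V2" using sub2[OF N2] .
      have "twinlab (V1 \<union> V2) (E1 \<union> E2) N (lab2 N)"
        unfolding twinlab_def
      proof (intro ballI impI)
        fix u u' w assume u: "u \<in> N" and u': "u' \<in> N" and w: "w \<in> V1 \<union> V2 - N" and eq: "lab2 N u = lab2 N u'"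
        have nE1: "(u,w) \<notin> E1" "(u',w) \<notin> E1" using u u' NV2 E1 disj by blast+
        show "(u,w) \<in> E1 \<union> E2 \<longleftrightarrow> (u',w) \<in> E1 \<union> E2"
        proof (cases "w \<in> V2")
          case True
          then have "(u,w) \<in> E2 \<longleftrightarrow> (u',w) \<in> E2" using lb2 N2 u u' eq w unfolding twinlab_def by blast
          then show ?thesis using nE1 by blast
        next
          case False
          then have "(u,w) \<notin> E2" "(u',w) \<notin> E2" using E2 by blast+
          then show ?thesis using nE1 by blast
        qed
      qed
      moreover have "\<forall>u\<in>N. \<forall>u'\<in>N. lab2 N u = lab2 N u' \<longrightarrow> l' u = l' u'"
      proof (intro ballI impI)
        fix u u' assume u: "u \<in> N" and u': "u' \<in> N" and eq: "lab2 N u = lab2 N u'"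
        have "l2 u = l2 u'" using bspec[OF lb2 N2] u u' eq by blast
        moreover have "u \<in> V2" "u' \<in> V2" using u u' NV2 by auto
        ultimately show "l' u = l' u'" unfolding l'_def using disj by auto
      qed
      ultimately have "lab N ` N \<subseteq> {1..k} \<and> twinlab (V1 \<union> V2) (E1 \<union> E2) N (lab N) \<and> (\<forall>u\<in>N. \<forall>u'\<in>N. lab N u = lab N u' \<longrightarrow> l' u = l' u')"
        unfolding lab2eq[OF N2] using bspec[OF lb2 N2] by (intro conjI) (elim conjE; assumption)+ }
    ultimately show "lab N ` N \<subseteq> {1..k} \<and> twinlab (V1 \<union> V2) (E1 \<union> E2) N (lab N) \<and> (\<forall>u\<in>N. \<forall>u'\<in>N. lab N u = lab N u' \<longrightarrow> l' u = l' u')"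
      using NNc[OF N] by fast
  qed
  have "goodfam k (V1 \<union> V2) (E1 \<union> E2) l' NN lab"
    unfolding goodfam_def
  proof (intro conjI)
    show "NN \<subseteq> Pow (V1 \<union> V2)" using subNN by blast
    show "V1 \<union> V2 \<in> NN" unfolding NN_def by blast
    show "\<forall>v\<in>V1 \<union> V2. {v} \<in> NN" using goodfamD(3)[OF g1] goodfamD(3)[OF g2] unfolding NN_def by blast
    show "\<forall>N\<in>NN. N \<noteq> {}" using ne1 ne2 V1ne unfolding NN_def by blast
  qed (fact lam, fact bin, fact labs)
  moreover have "l' ` (V1 \<union> V2) \<subseteq> {1..k}" using L1 L2 unfolding l'_def by auto
  ultimately show ?case using V1ne E1 E2 unfolding l'_def by blast
next
  case (join V E l i j)
  define J where "J = {(x, y). x \<in> V \<and> y \<in> V \<and> (l x = i \<and> l y = j \<or> l x = j \<and> l y = i)}"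
  from join.IH obtain NN lab where g: "goodfam k V E l NN lab" by blast
  have "goodfam k V (E \<union> J) l NN lab"
    unfolding goodfam_def
  proof (intro conjI)
    show "\<forall>N\<in>NN. lab N ` N \<subseteq> {1..k} \<and> twinlab V (E \<union> J) N (lab N) \<and> (\<forall>u\<in>N. \<forall>u'\<in>N. lab N u = lab N u' \<longrightarrow> l u = l u')"
    proof (rule ballI)
      fix N assume N: "N \<in> NN"
      have lbN: "lab N ` N \<subseteq> {1..k} \<and> twinlab V E N (lab N) \<and> (\<forall>u\<in>N. \<forall>u'\<in>N. lab N u = lab N u' \<longrightarrow> l u = l u')"
        using bspec[OF goodfamD(7)[OF g] N] .
      have lb: "lab N ` N \<subseteq> {1..k}" "twinlab V E N (lab N)" "\<forall>u\<in>N. \<forall>u'\<in>N. lab N u = lab N u' \<longrightarrow> l u = l u'"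
        using lbN by blast+
      have NV: "N \<subseteq> V" using goodfamD(1)[OF g] N by blast
      have tw: "twinlab V (E \<union> J) N (lab N)"
        unfolding twinlab_def
      proof (intro ballI impI)
        fix u u' w assume u: "u \<in> N" and u': "u' \<in> N" and w: "w \<in> V - N" and eq: "lab N u = lab N u'"
        have "(u,w) \<in> E \<longleftrightarrow> (u',w) \<in> E" using lb(2) u u' w eq unfolding twinlab_def by blast
        moreover have "l u = l u'" using lb(3) u u' eq by blast
        moreover have "u \<in> V" "u' \<in> V" using u u' NV by auto
        ultimately show "(u,w) \<in> E \<union> J \<longleftrightarrow> (u',w) \<in> E \<union> J" unfolding J_def by auto
      qed
      show "lab N ` N \<subseteq> {1..k} \<and> twinlab V (E \<union> J) N (lab N) \<and> (\<forall>u\<in>N. \<forall>u'\<in>N. lab N u = lab N u' \<longrightarrow> l u = l u')"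
        using lb(1) tw lb(3) by (intro conjI)
    qed
  qed (simp_all add: goodfamD[OF g])
  then show ?case using join.IH unfolding J_def by blast
next
  case (relabel V E l i j)
  from relabel.IH obtain NN lab where g: "goodfam k V E l NN lab" by blast
  have "\<forall>N\<in>NN. lab N ` N \<subseteq> {1..k} \<and> twinlab V E N (lab N) \<and> (\<forall>u\<in>N. \<forall>u'\<in>N. lab N u = lab N u' \<longrightarrow> (\<lambda>x. if l x = i then j else l x) u = (\<lambda>x. if l x = i then j else l x) u')"
  proof (intro ballI)
    fix N assume N: "N \<in> NN"
    have lbN: "lab N ` N \<subseteq> {1..k} \<and> twinlab V E N (lab N) \<and> (\<forall>u\<in>N. \<forall>u'\<in>N. lab N u = lab N u' \<longrightarrow> l u = l u')"
      using bspec[OF goodfamD(7)[OF g] N] .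
    have ref: "\<forall>u\<in>N. \<forall>u'\<in>N. lab N u = lab N u' \<longrightarrow> (\<lambda>x. if l x = i then j else l x) u = (\<lambda>x. if l x = i then j else l x) u'"
    proof (intro ballI impI)
      fix u u' assume "u \<in> N" "u' \<in> N" "lab N u = lab N u'"
      then have "l u = l u'" using lbN by blast
      then show "(\<lambda>x. if l x = i then j else l x) u = (\<lambda>x. if l x = i then j else l x) u'" by simp
    qed
    have "lab N ` N \<subseteq> {1..k}" "twinlab V E N (lab N)" using lbN by blast+
    then show "lab N ` N \<subseteq> {1..k} \<and> twinlab V E N (lab N) \<and> (\<forall>u\<in>N. \<forall>u'\<in>N. lab N u = lab N u' \<longrightarrow> (\<lambda>x. if l x = i then j else l x) u = (\<lambda>x. if l x = i then j else l x) u')"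
      using ref by (intro conjI)
  qed
  then have "goodfam k V E (\<lambda>x. if l x = i then j else l x) NN lab"
    unfolding goodfam_def using goodfamD(1-6)[OF g] by (intro conjI)
  moreover have "(\<lambda>x. if l x = i then j else l x) ` V \<subseteq> {1..k}" using relabel by auto
  ultimately show ?case using relabel.IH by blast
qed



lemma cw_edgeless:
  assumes "finite W" "W \<noteq> {}" "inj_on f V" "f ` V \<subseteq> {1..n}" "W \<subseteq> V"
  shows "\<exists>l. cw_build n W {} l \<and> (\<forall>x\<in>W. l x = f x)"
  using assms(1,2,5)
proof (induction W rule: finite_ne_induct)
  case (singleton x)
  have "f x \<in> {1..n}" using assms(4) singleton by auto
  then have "cw_build n {x} {} (\<lambda>_. f x)" by (rule cw_build.create)
  then show ?case by auto
next
  case (insert x F)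
  then obtain l2 where l2: "cw_build n F {} l2" "\<forall>y\<in>F. l2 y = f y" by auto
  have "f x \<in> {1..n}" using assms(4) insert by auto
  then have c: "cw_build n {x} {} (\<lambda>_. f x)" by (rule cw_build.create)
  have "{x} \<inter> F = {}" using insert by auto
  from cw_build.union[OF c l2(1) this]
  have "cw_build n ({x} \<union> F) ({} \<union> {}) (\<lambda>y. if y \<in> {x} then f x else l2 y)" .
  then have "cw_build n (insert x F) {} (\<lambda>y. if y \<in> {x} then f x else l2 y)" by simp
  moreover have "\<forall>y\<in>insert x F. (\<lambda>y. if y \<in> {x} then f x else l2 y) y = f y" using l2(2) by auto
  ultimately show ?case by blast
qed

lemma cw_edges:
  assumes "finite F" "F \<subseteq> E" "E \<subseteq> V \<times> V" "irrefl E" "inj_on f V" "f ` V \<subseteq> {1..n}"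
    "cw_build n V {} l0" "\<forall>x\<in>V. l0 x = f x"
  shows "cw_build n V (F \<union> F\<inverse>) l0"
  using assms(1,2)
proof (induction F rule: finite_induct)
  case empty
  then show ?case using assms(7) by simp
next
  case (insert p F)
  obtain x y where p: "p = (x,y)" by fastforce
  have xy: "(x,y) \<in> E" using insert p by auto
  then have xyV: "x \<in> V" "y \<in> V" using assms(3) by auto
  have "x \<noteq> y" using xy assms(4) unfolding irrefl_def by auto
  then have fne: "f x \<noteq> f y" using xyV assms(5) unfolding inj_on_def by auto
  have fr: "f x \<in> {1..n}" "f y \<in> {1..n}" using xyV assms(6) by auto
  have IH: "cw_build n V (F \<union> F\<inverse>) l0" using insert by auto
  from cw_build.join[OF IH fr fne]
  have j: "cw_build n V (F \<union> F\<inverse> \<union> {(a, b). a \<in> V \<and> b \<in> V \<and> (l0 a = f x \<and> l0 b = f y \<or> l0 a = f y \<and> l0 b = f x)}) l0" .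
  have J: "{(a, b). a \<in> V \<and> b \<in> V \<and> (l0 a = f x \<and> l0 b = f y \<or> l0 a = f y \<and> l0 b = f x)} = {(x,y),(y,x)}"
  proof (intro set_eqI iffI)
    fix q assume q: "q \<in> {(a, b). a \<in> V \<and> b \<in> V \<and> (l0 a = f x \<and> l0 b = f y \<or> l0 a = f y \<and> l0 b = f x)}"
    obtain a b where ab: "q = (a,b)" by fastforce
    have "a \<in> V" "b \<in> V" "f a = f x \<and> f b = f y \<or> f a = f y \<and> f b = f x" using q ab assms(8) by auto
    then have "a = x \<and> b = y \<or> a = y \<and> b = x" using xyV assms(5) unfolding inj_on_def by blast
    then show "q \<in> {(x,y),(y,x)}" using ab by auto
  next
    fix q assume "q \<in> {(x,y),(y,x)}"
    then show "q \<in> {(a, b). a \<in> V \<and> b \<in> V \<and> (l0 a = f x \<and> l0 b = f y \<or> l0 a = f y \<and> l0 b = f x)}"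
      using xyV assms(8) by auto
  qed
  have eqs: "F \<union> F\<inverse> \<union> {(x,y),(y,x)} = insert p F \<union> (insert p F)\<inverse>" using p by auto
  have "cw_build n V (F \<union> F\<inverse> \<union> {(x,y),(y,x)}) l0" using j unfolding J .
  then show ?case by (simp only: eqs)
qed

lemma cw_exists:
  assumes "finite V" "V \<noteq> {}" "E \<subseteq> V \<times> V" "sym E" "irrefl E"
  shows "\<exists>k l. cw_build k V E l"
proof -
  from finite_imp_inj_to_nat_seg[OF assms(1)]
  obtain f :: "'a \<Rightarrow> nat" and n :: nat where f: "f ` V = {i. i < n}" "inj_on f V" by blast
  define g where "g = (\<lambda>x. Suc (f x))"
  have g1: "inj_on g V" using f(2) unfolding g_def inj_on_def by auto
  have g2: "g ` V \<subseteq> {1..n}"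
  proof
    fix z assume "z \<in> g ` V"
    then obtain x where x: "x \<in> V" "z = Suc (f x)" unfolding g_def by blast
    have "f x \<in> {i. i < n}" using f(1) x(1) by blast
    then show "z \<in> {1..n}" using x(2) by simp
  qed
  obtain l0 where l0: "cw_build n V {} l0" "\<forall>x\<in>V. l0 x = g x"
    using cw_edgeless[OF assms(1) assms(2) g1 g2 order_refl] by blast
  have fE: "finite E" using assms(1,3) finite_subset by blast
  have "cw_build n V (E \<union> E\<inverse>) l0"
    using cw_edges[OF fE order_refl assms(3) assms(5) g1 g2 l0] .
  moreover have "E \<union> E\<inverse> = E" using assms(4) by (auto simp: sym_conv_converse_eq)
  ultimately have "cw_build n V E l0" by simp
  then show ?thesis by blast
qed

lemma cw_le:
  assumes "finite_graph V E" "cliquewidth V E \<le> t"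
  shows "\<exists>k\<le>t. \<exists>l. cw_build k V E l"
proof -
  have "\<exists>k l. cw_build k V E l" using assms(1) cw_exists unfolding finite_graph_def by blast
  then have "\<exists>l. cw_build (cliquewidth V E) V E l" unfolding cliquewidth_def by (rule LeastI_ex)
  then show ?thesis using assms(2) by blast
qed



lemma ex_argmax:
  fixes f :: "'b \<Rightarrow> 'c::linorder"
  assumes "finite S" "S \<noteq> {}"
  shows "\<exists>x\<in>S. \<forall>x'\<in>S. f x' \<le> f x"
  using assms
proof (induction S rule: finite_ne_induct)
  case (singleton x) then show ?case by simp
next
  case (insert x F)
  then obtain m where m: "m \<in> F" "\<forall>x'\<in>F. f x' \<le> f m" by blast
  show ?case
  proof (cases "f m \<le> f x")
    case True
    then have "\<forall>x'\<in>insert x F. f x' \<le> f x" using m(2) by (auto intro: order_trans)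
    then show ?thesis by blast
  next
    case False
    then have "\<forall>x'\<in>insert x F. f x' \<le> f m" using m(2) by auto
    then show ?thesis using m(1) by blast
  qed
qed

lemma ex_argmin:
  fixes f :: "'b \<Rightarrow> 'c::linorder"
  assumes "finite S" "S \<noteq> {}"
  shows "\<exists>x\<in>S. \<forall>x'\<in>S. f x \<le> f x'"
  using assms
proof (induction S rule: finite_ne_induct)
  case (singleton x) then show ?case by simp
next
  case (insert x F)
  then obtain m where m: "m \<in> F" "\<forall>x'\<in>F. f m \<le> f x'" by blast
  show ?case
  proof (cases "f x \<le> f m")
    case True
    then have "\<forall>x'\<in>insert x F. f x \<le> f x'" using m(2) by (auto intro: order_trans)
    then show ?thesis by blast
  next
    case False
    then have "\<forall>x'\<in>insert x F. f m \<le> f x'" using m(2) by auto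
    then show ?thesis using m(1) by blast
  qed
qed

locale cwf =
  fixes V :: "'a set" and E :: "('a \<times> 'a) set" and NN :: "'a set set" and lab :: "'a set \<Rightarrow> 'a \<Rightarrow> nat" and t :: nat
  assumes finV: "finite V" and Vne: "V \<noteq> {}" and EV: "E \<subseteq> V \<times> V" and symE: "sym E"
    and NNV: "NN \<subseteq> Pow V" and VNN: "V \<in> NN" and sing: "\<forall>v\<in>V. {v} \<in> NN" and NNne: "\<forall>N\<in>NN. N \<noteq> {}"
    and lam: "laminar NN" and bin: "binary NN"
    and labr: "\<forall>N\<in>NN. lab N ` N \<subseteq> {1..t}"
    and twin: "\<forall>N\<in>NN. twinlab V E N (lab N)"
begin

definition minc :: "('a set \<Rightarrow> bool) \<Rightarrow> 'a set" where
  "minc P = (SOME N. N \<in> NN \<and> P N \<and> (\<forall>M\<in>NN. P M \<longrightarrow> card N \<le> card M))"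

definition maxc :: "('a set \<Rightarrow> bool) \<Rightarrow> 'a set" where
  "maxc P = (SOME N. N \<in> NN \<and> P N \<and> (\<forall>M\<in>NN. P M \<longrightarrow> card M \<le> card N))"

lemma finNN: "N \<in> NN \<Longrightarrow> finite N"
  using NNV finV finite_subset by blast

lemma subV: "N \<in> NN \<Longrightarrow> N \<subseteq> V"
  using NNV by blast

lemma minc:
  assumes "M0 \<in> NN" "P M0"
  shows "minc P \<in> NN \<and> P (minc P) \<and> (\<forall>M\<in>NN. P M \<longrightarrow> card (minc P) \<le> card M)"
proof -
  from ex_has_least_nat[of "\<lambda>N. N \<in> NN \<and> P N" M0 card] assms
  obtain N where N: "N \<in> NN \<and> P N" "\<forall>M. M \<in> NN \<and> P M \<longrightarrow> card N \<le> card M" by blast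
  then have "N \<in> NN \<and> P N \<and> (\<forall>M\<in>NN. P M \<longrightarrow> card N \<le> card M)" by blast
  then have "(\<lambda>N. N \<in> NN \<and> P N \<and> (\<forall>M\<in>NN. P M \<longrightarrow> card N \<le> card M)) (SOME N. N \<in> NN \<and> P N \<and> (\<forall>M\<in>NN. P M \<longrightarrow> card N \<le> card M))"
    by (rule someI[where P="\<lambda>N. N \<in> NN \<and> P N \<and> (\<forall>M\<in>NN. P M \<longrightarrow> card N \<le> card M)"])
  then show ?thesis unfolding minc_def by simp
qed

lemma maxc:
  assumes "M0 \<in> NN" "P M0"
  shows "maxc P \<in> NN \<and> P (maxc P) \<and> (\<forall>M\<in>NN. P M \<longrightarrow> card M \<le> card (maxc P))"
proof -
  define S where "S = {N\<in>NN. P N}"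
  have fNN: "finite NN" using finite_subset[OF NNV] finV by simp
  have "S \<subseteq> NN" unfolding S_def by blast
  then have fS: "finite S" using fNN finite_subset by blast
  have "M0 \<in> S" using assms unfolding S_def by simp
  then have neS: "card ` S \<noteq> {}" by blast
  have "Max (card ` S) \<in> card ` S" using finite_imageI[OF fS] neS by (rule Max_in)
  then obtain N where N0: "Max (card ` S) = card N" "N \<in> S" by (rule imageE)
  then have N: "N \<in> S" "card N = Max (card ` S)" by simp_all
  have "\<forall>M\<in>NN. P M \<longrightarrow> card M \<le> card N"
  proof (intro ballI impI)
    fix M assume "M \<in> NN" "P M"
    then have "M \<in> S" unfolding S_def by blast
    then show "card M \<le> card N" using N(2) fS by simp
  qed
  then have "N \<in> NN \<and> P N \<and> (\<forall>M\<in>NN. P M \<longrightarrow> card M \<le> card N)" using N(1) unfolding S_def by blast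
  then have "(\<lambda>N. N \<in> NN \<and> P N \<and> (\<forall>M\<in>NN. P M \<longrightarrow> card M \<le> card N)) (SOME N. N \<in> NN \<and> P N \<and> (\<forall>M\<in>NN. P M \<longrightarrow> card M \<le> card N))"
    by (rule someI[where P="\<lambda>N. N \<in> NN \<and> P N \<and> (\<forall>M\<in>NN. P M \<longrightarrow> card M \<le> card N)"])
  then show ?thesis unfolding maxc_def by simp
qed

lemma comparable:
  assumes "N \<in> NN" "M \<in> NN" "x \<in> N" "x \<in> M"
  shows "N \<subseteq> M \<or> M \<subseteq> N"
  using lam assms unfolding laminar_def by blast

lemma card_eq_sub:
  assumes "M \<in> NN" "K \<subseteq> M" "card M \<le> card K"
  shows "K = M"
  using card_seteq[OF finNN[OF assms(1)] assms(2,3)] .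

lemma binD:
  assumes "N \<in> NN" "2 \<le> card N"
  obtains N1 N2 where "N1 \<in> NN" "N2 \<in> NN" "N1 \<noteq> {}" "N2 \<noteq> {}" "N1 \<inter> N2 = {}" "N = N1 \<union> N2"
  using bin assms unfolding binary_def by blast

lemma mincD:
  assumes "M0 \<in> NN" "P M0"
  shows "minc P \<in> NN" "P (minc P)" "\<And>M. M \<in> NN \<Longrightarrow> P M \<Longrightarrow> card (minc P) \<le> card M"
  using minc[of M0 P, OF assms] by blast+

lemma maxcD:
  assumes "M0 \<in> NN" "P M0"
  shows "maxc P \<in> NN" "P (maxc P)" "\<And>M. M \<in> NN \<Longrightarrow> P M \<Longrightarrow> card M \<le> card (maxc P)"
  using maxc[of M0 P, OF assms] by blast+

definition Bn :: "'a \<Rightarrow> 'a \<Rightarrow> 'a set" where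
  "Bn z1 z2 = minc (\<lambda>N. z1 \<in> N \<and> z2 \<in> N)"

definition An :: "'a \<Rightarrow> 'a option \<Rightarrow> 'a set" where
  "An z1 zo = (case zo of None \<Rightarrow> V | Some z3 \<Rightarrow> maxc (\<lambda>N. z1 \<in> N \<and> z3 \<notin> N))"

lemma struct:
  assumes XV: "X \<subseteq> V" and Xne: "X \<noteq> {}" and cV: "c \<in> V" and cX: "c \<notin> X"
  shows "\<exists>z1 z2 zo. z1 \<in> X \<and> z2 \<in> X \<and> set_option zo \<subseteq> X \<and> An z1 zo \<in> NN \<and> Bn z1 z2 \<in> NN
     \<and> Bn z1 z2 \<subseteq> An z1 zo \<and> c \<in> An z1 zo \<and> c \<notin> Bn z1 z2 \<and> An z1 zo \<inter> X \<subseteq> Bn z1 z2"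
proof -
  define P0 where "P0 = minc (\<lambda>N. c \<in> N \<and> N \<inter> X \<noteq> {})"
  have "V \<inter> X \<noteq> {}" using XV Xne by blast
  then have "c \<in> V \<and> V \<inter> X \<noteq> {}" using cV by blast
  from minc[of V "\<lambda>N. c \<in> N \<and> N \<inter> X \<noteq> {}", OF VNN this]
  have P0: "P0 \<in> NN" "c \<in> P0" "P0 \<inter> X \<noteq> {}" "\<forall>M\<in>NN. c \<in> M \<and> M \<inter> X \<noteq> {} \<longrightarrow> card P0 \<le> card M"
    unfolding P0_def by blast+
  define S where "S = P0 \<inter> X"
  have Sne: "S \<noteq> {}" using P0(3) unfolding S_def .
  have SX: "S \<subseteq> X" unfolding S_def by blast
  have SP0: "S \<subseteq> P0" unfolding S_def by blast
  obtain s where s: "s \<in> S" using Sne by blast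
  define A where "A = maxc (\<lambda>N. c \<in> N \<and> N \<inter> X = S)"
  have "c \<in> P0 \<and> P0 \<inter> X = S" using P0(2) unfolding S_def by blast
  from maxc[of P0 "\<lambda>N. c \<in> N \<and> N \<inter> X = S", OF P0(1) this]
  have A: "A \<in> NN" "c \<in> A" "A \<inter> X = S" "\<forall>M\<in>NN. c \<in> M \<and> M \<inter> X = S \<longrightarrow> card M \<le> card A"
    unfolding A_def by blast+
  define B where "B = minc (\<lambda>N. S \<subseteq> N)"
  from minc[of P0 "\<lambda>N. S \<subseteq> N", OF P0(1) SP0]
  have B: "B \<in> NN" "S \<subseteq> B" "\<forall>M\<in>NN. S \<subseteq> M \<longrightarrow> card B \<le> card M"
    unfolding B_def by blast+
  have BP0: "B \<subseteq> P0"
  proof -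
    have "s \<in> B" "s \<in> P0" using s B(2) SP0 by blast+
    then have "B \<subseteq> P0 \<or> P0 \<subseteq> B" using comparable[OF B(1) P0(1)] by blast
    moreover have "card B \<le> card P0" using B(3) P0(1) SP0 by blast
    ultimately show ?thesis using card_eq_sub[OF B(1)] by blast
  qed
  have P0A: "P0 \<subseteq> A"
  proof -
    have "A \<subseteq> P0 \<or> P0 \<subseteq> A" using comparable[OF A(1) P0(1) A(2) P0(2)] .
    moreover have "card P0 \<le> card A" using A(4) P0(1) P0(2) unfolding S_def by blast
    ultimately show ?thesis using card_eq_sub[OF P0(1)] by blast
  qed
  have sX: "s \<in> X" using s SX by blast
  then have sc: "s \<noteq> c" using cX by blast
  have cB: "c \<notin> B"
  proof -
    have "{c, s} \<subseteq> P0" using P0(2) s SP0 by blast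
    then have "card {c, s} \<le> card P0" using finNN[OF P0(1)] by (rule card_mono[rotated])
    then have "2 \<le> card P0" using sc by simp
    then obtain N1 N2 where N: "N1 \<in> NN" "N2 \<in> NN" "N1 \<noteq> {}" "N2 \<noteq> {}" "N1 \<inter> N2 = {}" "P0 = N1 \<union> N2"
      using binD[OF P0(1)] by blast
    have key: "c \<notin> B" if "Ni \<in> NN" "Nj \<in> NN" "Nj \<noteq> {}" "Ni \<inter> Nj = {}" "P0 = Ni \<union> Nj" "c \<in> Ni" for Ni Nj
    proof -
      have "Ni \<subset> P0" using that by blast
      then have "card Ni < card P0" using finNN[OF P0(1)] by (rule psubset_card_mono[rotated])
      then have "\<not> (c \<in> Ni \<and> Ni \<inter> X \<noteq> {})" using P0(4) that(1) by force
      then have "Ni \<inter> X = {}" using that(6) by blast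
      then have SNj: "S \<subseteq> Nj" using SX SP0 that(5) by blast
      have "s \<in> Nj" using s SNj by blast
      then have "B \<subseteq> Nj \<or> Nj \<subseteq> B" using comparable[OF B(1) that(2)] s B(2) by blast
      moreover have "card B \<le> card Nj" using B(3) that(2) SNj by blast
      ultimately have "B \<subseteq> Nj" using card_eq_sub[OF B(1)] by blast
      then show ?thesis using that(4,6) by blast
    qed
    have "c \<in> N1 \<or> c \<in> N2" using N(6) P0(2) by blast
    then show ?thesis
    proof
      assume "c \<in> N1" then show ?thesis using key[OF N(1) N(2) N(4) N(5) N(6)] by blast
    next
      assume "c \<in> N2"
      moreover have "N2 \<inter> N1 = {}" "P0 = N2 \<union> N1" using N(5,6) by blast+
      ultimately show ?thesis using key[OF N(2) N(1) N(3)] by blast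
    qed
  qed
  have Bz: "\<exists>z1\<in>S. \<exists>z2\<in>S. Bn z1 z2 = B"
  proof (cases "2 \<le> card B")
    case False
    have "B \<noteq> {}" using s B(2) by blast
    then have "card B \<noteq> 0" using finNN[OF B(1)] by simp
    then have "card B = 1" using False by simp
    then obtain b where b: "B = {b}" by (rule card_1_singletonE)
    then have sb: "s = b" using s B(2) by blast
    define M where "M = Bn s s"
    have sB: "s \<in> B" using B(2) s by (rule subsetD)
    then have sBB: "s \<in> B \<and> s \<in> B" by simp
    have M1: "M \<in> NN" unfolding M_def Bn_def using mincD(1)[of B "\<lambda>N. s \<in> N \<and> s \<in> N", OF B(1) sBB] .
    have M2: "s \<in> M" unfolding M_def Bn_def using mincD(2)[of B "\<lambda>N. s \<in> N \<and> s \<in> N", OF B(1) sBB] by (rule conjunct1)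
    have M3: "card M \<le> card B" unfolding M_def Bn_def using mincD(3)[of B "\<lambda>N. s \<in> N \<and> s \<in> N", OF B(1) sBB B(1) sBB] .
    note M = M1 M2 M3
    have "M \<subseteq> B \<or> B \<subseteq> M" using comparable[OF M(1) B(1) M(2)] s B(2) by blast
    moreover have "M \<subseteq> B \<Longrightarrow> M = B" using M(2) b sb by blast
    ultimately have "M = B" using card_eq_sub[OF M(1) _ M(3)] by blast
    then show ?thesis using s unfolding M_def by blast
  next
    case True
    then obtain N1 N2 where N: "N1 \<in> NN" "N2 \<in> NN" "N1 \<noteq> {}" "N2 \<noteq> {}" "N1 \<inter> N2 = {}" "B = N1 \<union> N2"
      using binD[OF B(1)] by blast
    have notin: "\<not> S \<subseteq> Ni" if "Ni \<in> NN" "Nj \<noteq> {}" "Ni \<inter> Nj = {}" "B = Ni \<union> Nj" for Ni Nj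
    proof
      assume "S \<subseteq> Ni"
      then have "card B \<le> card Ni" using B(3) that(1) by blast
      moreover have "Ni \<subset> B" using that by blast
      then have "card Ni < card B" using finNN[OF B(1)] by (rule psubset_card_mono[rotated])
      ultimately show False by simp
    qed
    have "\<not> S \<subseteq> N1" using notin[OF N(1) N(4) N(5) N(6)] .
    then obtain z1 where z1: "z1 \<in> S" "z1 \<notin> N1" by blast
    have "\<not> S \<subseteq> N2" using notin[OF N(2) N(3)] N(5,6) by blast
    then obtain z2 where z2: "z2 \<in> S" "z2 \<notin> N2" by blast
    have z1N2: "z1 \<in> N2" using z1 B(2) N(6) by blast
    have z2N1: "z2 \<in> N1" using z2 B(2) N(6) by blast
    define M where "M = Bn z1 z2"
    have zB: "z1 \<in> B \<and> z2 \<in> B" using z1(1) z2(1) B(2) by blast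
    have M1: "M \<in> NN" unfolding M_def Bn_def using mincD(1)[of B "\<lambda>N. z1 \<in> N \<and> z2 \<in> N", OF B(1) zB] .
    have M23: "z1 \<in> M \<and> z2 \<in> M" unfolding M_def Bn_def using mincD(2)[of B "\<lambda>N. z1 \<in> N \<and> z2 \<in> N", OF B(1) zB] .
    have M4: "card M \<le> card B" unfolding M_def Bn_def using mincD(3)[of B "\<lambda>N. z1 \<in> N \<and> z2 \<in> N", OF B(1) zB B(1) zB] .
    have M: "M \<in> NN" "z1 \<in> M" "z2 \<in> M" "card M \<le> card B" using M1 M23 M4 by simp_all
    have "N1 \<subseteq> M \<or> M \<subseteq> N1" using comparable[OF N(1) M(1) z2N1 M(3)] .
    then have "N1 \<subseteq> M" using M(2) z1(2) by blast
    moreover have "N2 \<subseteq> M \<or> M \<subseteq> N2" using comparable[OF N(2) M(1) z1N2 M(2)] .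
    then have "N2 \<subseteq> M" using M(3) z2(2) by blast
    ultimately have "B \<subseteq> M" using N(6) by blast
    then have "B = M" using card_eq_sub[OF M(1) _ M(4)] by blast
    then show ?thesis using z1(1) z2(1) unfolding M_def by blast
  qed
  then obtain z1 z2 where z12: "z1 \<in> S" "z2 \<in> S" "Bn z1 z2 = B" by blast
  have Az: "\<exists>zo. set_option zo \<subseteq> X \<and> An z1 zo = A"
  proof (cases "A = V")
    case True
    then show ?thesis unfolding An_def by (intro exI[of _ None]) simp
  next
    case False
    then have AV: "A \<subset> V" using subV[OF A(1)] by blast
    define A' where "A' = minc (\<lambda>N. A \<subset> N)"
    from minc[of V "\<lambda>N. A \<subset> N", OF VNN AV]
    have A': "A' \<in> NN" "A \<subset> A'" "\<forall>M\<in>NN. A \<subset> M \<longrightarrow> card A' \<le> card M" unfolding A'_def by blast+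
    have "card A < card A'" using A'(2) finNN[OF A'(1)] by (rule psubset_card_mono[rotated])
    then have "\<not> (c \<in> A' \<and> A' \<inter> X = S)" using A(4) A'(1) by force
    then have "A' \<inter> X \<noteq> S" using A(2) A'(2) by blast
    moreover have "S \<subseteq> A' \<inter> X" using A(3) A'(2) by blast
    ultimately obtain z3 where z3: "z3 \<in> A'" "z3 \<in> X" "z3 \<notin> S" by blast
    have z3A: "z3 \<notin> A" using z3 A(3) by blast
    have z1A: "z1 \<in> A" using z12(1) A(3) by blast
    define M where "M = An z1 (Some z3)"
    have zA: "z1 \<in> A \<and> z3 \<notin> A" using z1A z3A by simp
    have Mdef: "M = maxc (\<lambda>N. z1 \<in> N \<and> z3 \<notin> N)" unfolding M_def An_def by simp
    have M1: "M \<in> NN" unfolding Mdef using maxcD(1)[of A "\<lambda>N. z1 \<in> N \<and> z3 \<notin> N", OF A(1) zA] .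
    have M23: "z1 \<in> M \<and> z3 \<notin> M" unfolding Mdef using maxcD(2)[of A "\<lambda>N. z1 \<in> N \<and> z3 \<notin> N", OF A(1) zA] .
    have M4: "card A \<le> card M" unfolding Mdef using maxcD(3)[of A "\<lambda>N. z1 \<in> N \<and> z3 \<notin> N", OF A(1) zA A(1) zA] .
    have M: "M \<in> NN" "z1 \<in> M" "z3 \<notin> M" "card A \<le> card M" using M1 M23 M4 by simp_all
    have "M \<subseteq> A \<or> A \<subseteq> M" using comparable[OF M(1) A(1) M(2) z1A] .
    moreover have "\<not> A \<subset> M"
    proof
      assume AM: "A \<subset> M"
      then have "card A' \<le> card M" using A'(3) M(1) by blast
      have cM: "c \<in> M" using AM A(2) by blast
      have cA': "c \<in> A'" using A'(2) A(2) by blast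
      have "M \<subseteq> A' \<or> A' \<subseteq> M" using comparable[OF M(1) A'(1) cM cA'] .
      then have "A' \<subseteq> M" using card_eq_sub[OF A'(1) _ \<open>card A' \<le> card M\<close>] by blast
      then show False using z3(1) M(3) by blast
    qed
    ultimately have "M = A" using card_eq_sub[OF A(1) _ M(4)] by blast
    then show ?thesis using z3(2) unfolding M_def by (intro exI[of _ "Some z3"]) simp
  qed
  then obtain zo where zo: "set_option zo \<subseteq> X" "An z1 zo = A" by blast
  have "z1 \<in> X" "z2 \<in> X" using z12 SX by blast+
  moreover have "B \<subseteq> A" using BP0 P0A by blast
  moreover have "A \<inter> X \<subseteq> B" using A(3) B(2) by blast
  ultimately show ?thesis using zo z12(3) A(1) B(1) A(2) cB by blast
qed

lemma twinD:
  assumes "N \<in> NN" "u \<in> N" "u' \<in> N" "w \<in> V - N" "lab N u = lab N u'"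
  shows "(u,w) \<in> E \<longleftrightarrow> (u',w) \<in> E"
proof -
  have "twinlab V E N (lab N)" using bspec[OF twin assms(1)] .
  then have "\<forall>u\<in>N. \<forall>u'\<in>N. \<forall>w\<in>V-N. lab N u = lab N u' \<longrightarrow> ((u,w)\<in>E \<longleftrightarrow> (u',w)\<in>E)"
    unfolding twinlab_def .
  then show ?thesis using assms(2-5) by blast
qed

definition bq :: "'a set \<Rightarrow> 'a set \<Rightarrow> nat \<Rightarrow> 'a set \<times> 'a set" where
  "bq A B k = (if k < t then ({u\<in>A. lab A u = Suc k}, {w\<in>V-A. \<exists>u\<in>A. lab A u = Suc k \<and> (u,w)\<in>E})
     else ({z\<in>V-B. \<exists>u\<in>B. lab B u = Suc (k-t) \<and> (z,u)\<in>E}, {u\<in>B. lab B u = Suc (k-t)}))"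

lemma bq_edges:
  assumes "A \<in> NN" "B \<in> NN"
  shows "\<forall>a\<in>fst (bq A B k). \<forall>b\<in>snd (bq A B k). (a,b) \<in> E"
proof (cases "k < t")
  case True
  show ?thesis
  proof (intro ballI)
    fix a b assume a: "a \<in> fst (bq A B k)" and b: "b \<in> snd (bq A B k)"
    have a': "a \<in> A" "lab A a = Suc k" using a True unfolding bq_def by auto
    have "b \<in> V - A" "\<exists>u\<in>A. lab A u = Suc k \<and> (u,b)\<in>E" using b True unfolding bq_def by auto
    then obtain u where u: "u \<in> A" "lab A u = Suc k" "(u,b) \<in> E" "b \<in> V - A" by blast
    have "(u,b) \<in> E \<longleftrightarrow> (a,b) \<in> E" using twinD[OF assms(1) u(1) a'(1) u(4)] u(2) a'(2) by simp
    then show "(a,b) \<in> E" using u(3) by simp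
  qed
next
  case False
  show ?thesis
  proof (intro ballI)
    fix a b assume a: "a \<in> fst (bq A B k)" and b: "b \<in> snd (bq A B k)"
    have "a \<in> V - B" "\<exists>u\<in>B. lab B u = Suc (k-t) \<and> (a,u)\<in>E" using a False unfolding bq_def by auto
    then obtain u where u: "u \<in> B" "lab B u = Suc (k-t)" "(a,u) \<in> E" "a \<in> V - B" by blast
    have b': "b \<in> B" "lab B b = Suc (k-t)" using b False unfolding bq_def by auto
    have "(u,a) \<in> E \<longleftrightarrow> (b,a) \<in> E" using twinD[OF assms(2) u(1) b'(1) u(4)] u(2) b'(2) by simp
    moreover have "(u,a) \<in> E" using u(3) symE unfolding sym_def by blast
    ultimately have "(b,a) \<in> E" by simp
    then show "(a,b) \<in> E" using symE unfolding sym_def by blast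
  qed
qed

lemma bq_cover:
  assumes "A \<in> NN" "B \<in> NN" "B \<subseteq> A"
  shows "\<forall>z\<in>A-B. \<forall>y. y \<notin> A-B \<longrightarrow> (z,y) \<in> E \<longrightarrow> (\<exists>k<2*t. z \<in> fst (bq A B k) \<and> y \<in> snd (bq A B k))"
proof (intro ballI allI impI)
  fix z y assume z: "z \<in> A - B" and y: "y \<notin> A - B" and zy: "(z,y) \<in> E"
  have yV: "y \<in> V" and zV: "z \<in> V" using zy EV by auto
  show "\<exists>k<2*t. z \<in> fst (bq A B k) \<and> y \<in> snd (bq A B k)"
  proof (cases "y \<in> A")
    case False
    have "lab A z \<in> {1..t}" using labr assms(1) z by blast
    then obtain k where k: "lab A z = Suc k" "k < t" by (cases "lab A z") auto
    have "z \<in> fst (bq A B k)" using k z unfolding bq_def by auto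
    moreover have "y \<in> snd (bq A B k)" using k z zy yV False unfolding bq_def by auto
    moreover have "k < 2*t" using k by simp
    ultimately show ?thesis by blast
  next
    case True
    then have yB: "y \<in> B" using y by blast
    have "lab B y \<in> {1..t}" using labr assms(2) yB by blast
    then obtain m where m: "lab B y = Suc m" "m < t" by (cases "lab B y") auto
    define k where "k = t + m"
    have k: "\<not> k < t" "k - t = m" "k < 2*t" using m unfolding k_def by auto
    have "z \<in> fst (bq A B k)" using k m z zy zV yB unfolding bq_def by auto
    moreover have "y \<in> snd (bq A B k)" using k m yB unfolding bq_def by auto
    ultimately show ?thesis using k(3) by blast
  qed
qed

definition okp :: "'a set \<Rightarrow> 'a set \<Rightarrow> (nat \<Rightarrow> 'a option) \<Rightarrow> (nat \<Rightarrow> 'a option) \<Rightarrow> 'a \<Rightarrow> nat \<Rightarrow> bool" where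
  "okp A B px ny c r \<longleftrightarrow> c \<in> V \<and> c \<in> A \<and> c \<notin> B \<and>
     (\<forall>k<2*t. (\<forall>x. px k = Some x \<longrightarrow> Fd E (fst (bq A B k)) c + 1 + Gd E (snd (bq A B k)) x \<le> enat r) \<and>
              (\<forall>y. ny k = Some y \<longrightarrow> enat r < Fd E (fst (bq A B k)) c + 1 + Gd E (snd (bq A B k)) y))"

lemma okp_cong:
  assumes "\<forall>k<2*t. px k = px' k \<and> ny k = ny' k"
  shows "okp A B px ny c r \<longleftrightarrow> okp A B px' ny' c r"
  using assms unfolding okp_def by simp

definition mainball :: "'a set \<Rightarrow> 'a set \<Rightarrow> (nat \<Rightarrow> 'a option) \<Rightarrow> (nat \<Rightarrow> 'a option) \<Rightarrow> 'a set" where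
  "mainball A B px ny = (if \<exists>p. okp A B px ny (fst p) (snd p)
      then ball V E (fst (SOME p. okp A B px ny (fst p) (snd p))) (int (snd (SOME p. okp A B px ny (fst p) (snd p))))
      else {})"

definition rho :: "'a option list \<Rightarrow> 'a set" where
  "rho a = (case a ! 0 of
     Some z1 \<Rightarrow> mainball (An z1 (a ! 2)) (Bn z1 (case a ! 1 of Some z \<Rightarrow> z | None \<Rightarrow> z1))
                 (\<lambda>k. a ! (3 + 2*k)) (\<lambda>k. a ! (4 + 2*k))
   | None \<Rightarrow> (case a ! 1 of
        Some c \<Rightarrow> (case a ! 2 of
            Some x \<Rightarrow> (if c \<in> V \<and> gdist E c x \<noteq> \<infinity> then ball V E c (int (the_enat (gdist E c x))) else {})
          | None \<Rightarrow> {})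
      | None \<Rightarrow> {}))"

lemma empty_hyper: "{} \<in> ball_hyperedges V E"
proof -
  obtain v where v: "v \<in> V" using Vne by blast
  have "ball V E v (-1) = {}" unfolding ball_def by simp
  then show ?thesis unfolding ball_hyperedges_def using v by blast
qed

lemma ball_hyper: "c \<in> V \<Longrightarrow> ball V E c r \<in> ball_hyperedges V E"
  unfolding ball_hyperedges_def by blast

lemma mainball_hyper: "mainball A B px ny \<in> ball_hyperedges V E"
proof (cases "\<exists>p. okp A B px ny (fst p) (snd p)")
  case True
  then have "okp A B px ny (fst (SOME p. okp A B px ny (fst p) (snd p))) (snd (SOME p. okp A B px ny (fst p) (snd p)))"
    by (rule someI_ex)
  then have "fst (SOME p. okp A B px ny (fst p) (snd p)) \<in> V" unfolding okp_def by blast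
  then show ?thesis using True unfolding mainball_def by (simp add: ball_hyper)
next
  case False
  then show ?thesis unfolding mainball_def using empty_hyper by simp
qed

lemma rho_hyper: "rho a \<in> ball_hyperedges V E"
  unfolding rho_def
  by (auto simp: mainball_hyper empty_hyper ball_hyper split: option.split)

lemma mainball_realizes:
  assumes ok: "okp A B px ny c0 r0"
    and AB: "A \<in> NN" "B \<in> NN" "B \<subseteq> A"
    and XpV: "Xp \<subseteq> V" and XmV: "Xm \<subseteq> V" and disjX: "A \<inter> (Xp \<union> Xm) \<subseteq> B"
    and pxP: "\<And>x. x \<in> Xp \<Longrightarrow> \<exists>k<2*t. \<exists>xk. px k = Some xk \<and> Gd E (snd (bq A B k)) x \<le> Gd E (snd (bq A B k)) xk"
    and nyP: "\<And>y k. y \<in> Xm \<Longrightarrow> k < 2*t \<Longrightarrow> \<exists>yk. ny k = Some yk \<and> Gd E (snd (bq A B k)) yk \<le> Gd E (snd (bq A B k)) y"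
  shows "realizes (mainball A B px ny) (Xp, Xm)"
proof -
  have ex: "\<exists>p. okp A B px ny (fst p) (snd p)" using ok by (intro exI[of _ "(c0, r0)"]) simp
  define p where "p = (SOME p. okp A B px ny (fst p) (snd p))"
  have okc: "okp A B px ny (fst p) (snd p)" unfolding p_def using ex by (rule someI_ex)
  define c r where "c = fst p" and "r = snd p"
  have mb: "mainball A B px ny = ball V E c (int r)" using ex unfolding mainball_def c_def r_def p_def by simp
  have okc': "okp A B px ny c r" using okc unfolding c_def r_def .
  have cV: "c \<in> V" and cZ: "c \<in> A - B" using okc' unfolding okp_def by blast+
  have cov: "\<forall>z\<in>A-B. \<forall>y. y \<notin> A-B \<longrightarrow> (z,y) \<in> E \<longrightarrow> (\<exists>k<2*t. z \<in> fst (bq A B k) \<and> y \<in> snd (bq A B k))"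
    using bq_cover[OF AB] .
  have pos: "x \<in> ball V E c (int r)" if x: "x \<in> Xp" for x
  proof -
    obtain k xk where k: "k < 2*t" "px k = Some xk" "Gd E (snd (bq A B k)) x \<le> Gd E (snd (bq A B k)) xk"
      using pxP[OF x] by blast
    have "Fd E (fst (bq A B k)) c + 1 + Gd E (snd (bq A B k)) xk \<le> enat r"
      using okc' k(1,2) unfolding okp_def by blast
    moreover have "Fd E (fst (bq A B k)) c + 1 + Gd E (snd (bq A B k)) x \<le> Fd E (fst (bq A B k)) c + 1 + Gd E (snd (bq A B k)) xk"
      using k(3) by (intro add_mono order_refl)
    moreover have "gdist E c x \<le> Fd E (fst (bq A B k)) c + 1 + Gd E (snd (bq A B k)) x"
      using upper[OF bq_edges[OF AB(1,2)]] .
    ultimately have "gdist E c x \<le> enat r" by (meson order_trans)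
    moreover have "x \<in> V" using x XpV by blast
    ultimately show ?thesis unfolding ball_mem by simp
  qed
  have neg: "y \<notin> ball V E c (int r)" if y: "y \<in> Xm" for y
  proof
    assume "y \<in> ball V E c (int r)"
    then have d: "gdist E c y \<le> enat r" unfolding ball_mem by simp
    then have dfin: "gdist E c y \<noteq> \<infinity>" by (cases "gdist E c y") auto
    have yZ: "y \<notin> A - B" using y disjX by blast
    from lower[OF cZ yZ dfin cov]
    obtain k where k: "k < 2*t" "Fd E (fst (bq A B k)) c + 1 + Gd E (snd (bq A B k)) y \<le> gdist E c y" by blast
    obtain yk where yk: "ny k = Some yk" "Gd E (snd (bq A B k)) yk \<le> Gd E (snd (bq A B k)) y"
      using nyP[OF y k(1)] by blast
    have "enat r < Fd E (fst (bq A B k)) c + 1 + Gd E (snd (bq A B k)) yk"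
      using okc' k(1) yk(1) unfolding okp_def by blast
    also have "\<dots> \<le> Fd E (fst (bq A B k)) c + 1 + Gd E (snd (bq A B k)) y"
      using yk(2) by (intro add_mono order_refl)
    also have "\<dots> \<le> gdist E c y" by (fact k(2))
    also have "\<dots> \<le> enat r" by (fact d)
    finally show False by simp
  qed
  show ?thesis unfolding realizes_def mb using pos neg by auto
qed

lemma mainball_cong:
  assumes "\<forall>k<2*t. px k = px' k \<and> ny k = ny' k"
  shows "mainball A B px ny = mainball A B px' ny'"
proof -
  have "(\<lambda>p. okp A B px ny (fst p) (snd p)) = (\<lambda>p. okp A B px' ny' (fst p) (snd p))"
    by (rule ext) (simp only: okp_cong[OF assms])
  then show ?thesis unfolding mainball_def by simp
qed

lemma compress:
  assumes "(Xp, Xm) \<in> samples V (ball_hyperedges V E)"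
  shows "\<exists>a\<in>arrays (4*t+3) (Xp \<union> Xm). realizes (rho a) (Xp, Xm)"
proof -
  have XpV: "Xp \<subseteq> V" and XmV: "Xm \<subseteq> V" and "\<exists>e\<in>ball_hyperedges V E. Xp \<subseteq> e \<and> Xm \<inter> e = {}"
    using assms unfolding samples_def by blast+
  then obtain c r where cV: "c \<in> V" and pos: "Xp \<subseteq> ball V E c r" and neg: "Xm \<inter> ball V E c r = {}"
    unfolding ball_hyperedges_def by blast
  have finXp: "finite Xp" using finite_subset[OF XpV finV] .
  have finXm: "finite Xm" using finite_subset[OF XmV finV] .
  show ?thesis
  proof (cases "Xp = {}")
    case True
    define a where "a = replicate (4*t+3) (None :: 'a option)"
    have "a \<in> arrays (4*t+3) (Xp \<union> Xm)" unfolding a_def arrays_def by auto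
    moreover have "rho a = {}" unfolding a_def rho_def by simp
    ultimately show ?thesis using True unfolding realizes_def by (intro bexI[of _ a]) simp_all
  next
    case False
    then obtain x0 where x0: "x0 \<in> Xp" by blast
    have r0: "0 \<le> r" using pos x0 unfolding ball_def by blast
    define R where "R = nat r"
    have memR: "v \<in> ball V E c r \<longleftrightarrow> v \<in> V \<and> gdist E c v \<le> enat R" for v
      unfolding ball_mem R_def using r0 by simp
    have posd: "gdist E c x \<le> enat R" if "x \<in> Xp" for x using pos that memR by blast
    have negd: "enat R < gdist E c y" if "y \<in> Xm" for y
    proof -
      have "y \<notin> ball V E c r" using neg that by blast
      then have "\<not> gdist E c y \<le> enat R" using memR that XmV by blast
      then show ?thesis by simp
    qed
    show ?thesis
    proof (cases "c \<in> Xp \<union> Xm")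
      case True
      have cXp: "c \<in> Xp"
      proof (rule ccontr)
        assume "c \<notin> Xp"
        then have "c \<in> Xm" using True by blast
        then have "enat R < gdist E c c" by (rule negd)
        then show False by (simp add: gdist_refl)
      qed
      obtain xm where xm: "xm \<in> Xp" "\<forall>x\<in>Xp. gdist E c x \<le> gdist E c xm"
        using ex_argmax[OF finXp False, of "gdist E c"] by blast
      have "gdist E c xm \<le> enat R" using posd xm(1) .
      then obtain D where D: "gdist E c xm = enat D" by (cases "gdist E c xm") auto
      define a where "a = [None, Some c, Some xm] @ replicate (4*t) (None :: 'a option)"
      have arr: "a \<in> arrays (4*t+3) (Xp \<union> Xm)" unfolding a_def arrays_def using cXp xm(1) by auto
      have ra: "rho a = ball V E c (int D)" unfolding a_def rho_def using cV D by simp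
      have "realizes (ball V E c (int D)) (Xp, Xm)"
        unfolding realizes_def
      proof (intro conjI)
        show "fst (Xp, Xm) \<subseteq> ball V E c (int D)"
        proof
          fix x assume "x \<in> fst (Xp, Xm)"
          then have x: "x \<in> Xp" by simp
          have "gdist E c x \<le> enat D" using xm(2) x D by simp
          then show "x \<in> ball V E c (int D)" unfolding ball_mem using x XpV by auto
        qed
        show "ball V E c (int D) \<inter> snd (Xp, Xm) = {}"
        proof (rule ccontr)
          assume "ball V E c (int D) \<inter> snd (Xp, Xm) \<noteq> {}"
          then obtain y where y: "y \<in> Xm" "y \<in> ball V E c (int D)" by auto
          then have "gdist E c y \<le> enat D" unfolding ball_mem by simp
          moreover have "enat D \<le> enat R" using posd[OF xm(1)] D by simp
          moreover have "enat R < gdist E c y" using negd[OF y(1)] .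
          ultimately have "enat R < enat D" by (meson order_less_le_trans)
          then show False using \<open>enat D \<le> enat R\<close> by simp
        qed
      qed
      then have "realizes (rho a) (Xp, Xm)" using ra by simp
      then show ?thesis by (rule bexI[OF _ arr])
    next
      case cX: False
      have XV: "Xp \<union> Xm \<subseteq> V" using XpV XmV by blast
      have Xne: "Xp \<union> Xm \<noteq> {}" using False by blast
      from struct[OF XV Xne cV cX]
      obtain z1 z2 zo where zz: "z1 \<in> Xp \<union> Xm" "z2 \<in> Xp \<union> Xm" "set_option zo \<subseteq> Xp \<union> Xm"
        "An z1 zo \<in> NN" "Bn z1 z2 \<in> NN" "Bn z1 z2 \<subseteq> An z1 zo" "c \<in> An z1 zo" "c \<notin> Bn z1 z2"
        "An z1 zo \<inter> (Xp \<union> Xm) \<subseteq> Bn z1 z2" by blast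
      define A where "A = An z1 zo"
      define B where "B = Bn z1 z2"
      have AB: "A \<in> NN" "B \<in> NN" "B \<subseteq> A" using zz unfolding A_def B_def by blast+
      have cZ: "c \<in> A - B" using zz unfolding A_def B_def by blast
      have disjX: "A \<inter> (Xp \<union> Xm) \<subseteq> B" using zz unfolding A_def B_def by blast
      define Fk where "Fk = (\<lambda>k v. Fd E (fst (bq A B k)) v)"
      define Gk where "Gk = (\<lambda>k w. Gd E (snd (bq A B k)) w)"
      define Pk where "Pk = (\<lambda>k. {x\<in>Xp. Fk k c + 1 + Gk k x \<le> enat R})"
      define px where "px = (\<lambda>k. if Pk k = {} then None else Some (SOME x. x \<in> Pk k \<and> (\<forall>x'\<in>Pk k. Gk k x' \<le> Gk k x)))"
      define ny where "ny = (\<lambda>k. if Xm = {} then None else Some (SOME y. y \<in> Xm \<and> (\<forall>y'\<in>Xm. Gk k y \<le> Gk k y')))"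
      have pxS: "x \<in> Pk k \<and> (\<forall>x'\<in>Pk k. Gk k x' \<le> Gk k x)" if "px k = Some x" for k x
      proof -
        have ne: "Pk k \<noteq> {}" using that unfolding px_def by (auto split: if_splits)
        have fin: "finite (Pk k)" using finXp unfolding Pk_def by simp
        have ex: "\<exists>x. x \<in> Pk k \<and> (\<forall>x'\<in>Pk k. Gk k x' \<le> Gk k x)" using ex_argmax[OF fin ne, of "Gk k"] by blast
        have "x = (SOME x. x \<in> Pk k \<and> (\<forall>x'\<in>Pk k. Gk k x' \<le> Gk k x))" using that ne unfolding px_def by simp
        then show ?thesis using someI_ex[OF ex] by simp
      qed
      have pxE: "\<exists>x. px k = Some x" if "Pk k \<noteq> {}" for k using that unfolding px_def by simp
      have nyS: "y \<in> Xm \<and> (\<forall>y'\<in>Xm. Gk k y \<le> Gk k y')" if "ny k = Some y" for k y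
      proof -
        have ne: "Xm \<noteq> {}" using that unfolding ny_def by (auto split: if_splits)
        have ex: "\<exists>y. y \<in> Xm \<and> (\<forall>y'\<in>Xm. Gk k y \<le> Gk k y')" using ex_argmin[OF finXm ne, of "Gk k"] by blast
        have "y = (SOME y. y \<in> Xm \<and> (\<forall>y'\<in>Xm. Gk k y \<le> Gk k y'))" using that ne unfolding ny_def by simp
        then show ?thesis using someI_ex[OF ex] by simp
      qed
      have nyE: "\<exists>y. ny k = Some y" if "Xm \<noteq> {}" for k using that unfolding ny_def by simp
      have ok: "okp A B px ny c R"
        unfolding okp_def
      proof (intro conjI allI impI)
        show "c \<in> V" by (fact cV)
        show "c \<in> A" "c \<notin> B" using cZ by blast+
      next
        fix k x assume "k < 2*t" "px k = Some x"
        then have "x \<in> Pk k" using pxS by blast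
        then show "Fd E (fst (bq A B k)) c + 1 + Gd E (snd (bq A B k)) x \<le> enat R"
          unfolding Pk_def Fk_def Gk_def by simp
      next
        fix k y assume "k < 2*t" "ny k = Some y"
        then have y: "y \<in> Xm" using nyS by blast
        have "enat R < gdist E c y" using negd[OF y] .
        also have "\<dots> \<le> Fd E (fst (bq A B k)) c + 1 + Gd E (snd (bq A B k)) y"
          using upper[OF bq_edges[OF AB(1,2)]] .
        finally show "enat R < Fd E (fst (bq A B k)) c + 1 + Gd E (snd (bq A B k)) y" .
      qed
      have cov: "\<forall>z\<in>A-B. \<forall>y. y \<notin> A-B \<longrightarrow> (z,y) \<in> E \<longrightarrow> (\<exists>k<2*t. z \<in> fst (bq A B k) \<and> y \<in> snd (bq A B k))"
        using bq_cover[OF AB] .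
      have pxP: "\<exists>k<2*t. \<exists>xk. px k = Some xk \<and> Gd E (snd (bq A B k)) x \<le> Gd E (snd (bq A B k)) xk"
        if x: "x \<in> Xp" for x
      proof -
        have xZ: "x \<notin> A - B" using x disjX by blast
        have d: "gdist E c x \<le> enat R" using posd[OF x] .
        then have fin: "gdist E c x \<noteq> \<infinity>" by (cases "gdist E c x") auto
        from lower[OF cZ xZ fin cov]
        obtain k where k: "k < 2*t" "Fd E (fst (bq A B k)) c + 1 + Gd E (snd (bq A B k)) x \<le> gdist E c x" by blast
        have "x \<in> Pk k" unfolding Pk_def Fk_def Gk_def using x k(2) d by (simp add: order_trans[OF k(2) d])
        then obtain xk where xk: "px k = Some xk" using pxE by blast
        then have "Gk k x \<le> Gk k xk" using pxS[OF xk] \<open>x \<in> Pk k\<close> by blast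
        then show ?thesis using k(1) xk unfolding Gk_def by blast
      qed
      have nyP: "\<exists>yk. ny k = Some yk \<and> Gd E (snd (bq A B k)) yk \<le> Gd E (snd (bq A B k)) y"
        if y: "y \<in> Xm" and k: "k < 2*t" for y k
      proof -
        have "Xm \<noteq> {}" using y by blast
        then obtain yk where yk: "ny k = Some yk" using nyE by blast
        then have "Gk k yk \<le> Gk k y" using nyS[OF yk] y by blast
        then show ?thesis using yk unfolding Gk_def by blast
      qed
      have real: "realizes (mainball A B px ny) (Xp, Xm)"
        using mainball_realizes[OF ok AB XpV XmV disjX pxP nyP] by blast
      define f where "f = (\<lambda>j::nat. if j = 0 then Some z1 else if j = 1 then Some z2 else if j = 2 then zo
                          else if even (j - 3) then px ((j - 3) div 2) else ny ((j - 3) div 2))"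
      define a where "a = map f [0..<4*t+3]"
      have a0: "a ! 0 = Some z1" unfolding a_def f_def by simp
      have a1: "a ! 1 = Some z2" unfolding a_def f_def by simp
      have a2: "a ! 2 = zo" unfolding a_def f_def by simp
      have a3: "a ! (3 + 2*k) = px k" if "k < 2*t" for k
      proof -
        have "3 + 2*k < 4*t+3" using that by simp
        then have "a ! (3 + 2*k) = f (3 + 2*k)" unfolding a_def by simp
        then show ?thesis unfolding f_def by simp
      qed
      have a4: "a ! (4 + 2*k) = ny k" if "k < 2*t" for k
      proof -
        have "4 + 2*k < 4*t+3" using that by simp
        then have "a ! (4 + 2*k) = f (4 + 2*k)" unfolding a_def by simp
        moreover have "(4 + 2*k) - 3 = Suc (2*k)" by simp
        ultimately show ?thesis unfolding f_def by simp
      qed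
      have "rho a = mainball A B (\<lambda>k. a ! (3 + 2*k)) (\<lambda>k. a ! (4 + 2*k))"
        unfolding rho_def a0 a1 a2 A_def B_def by simp
      also have "\<dots> = mainball A B px ny"
        using a3 a4 by (intro mainball_cong) simp
      finally have ra: "rho a = mainball A B px ny" .
      have fr: "f j \<in> Some ` (Xp \<union> Xm) \<union> {None}" for j
      proof -
        have pxr: "px k \<in> Some ` (Xp \<union> Xm) \<union> {None}" for k
        proof (cases "px k")
          case (Some x) then have "x \<in> Xp" using pxS[OF Some] unfolding Pk_def by blast
          then show ?thesis using Some by blast
        qed simp
        have nyr: "ny k \<in> Some ` (Xp \<union> Xm) \<union> {None}" for k
        proof (cases "ny k")
          case (Some y) then have "y \<in> Xm" using nyS[OF Some] by blast
          then show ?thesis using Some by blast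
        qed simp
        have zor: "zo \<in> Some ` (Xp \<union> Xm) \<union> {None}" using zz(3) by (cases zo) auto
        show ?thesis unfolding f_def using zz(1,2) zor pxr nyr by simp
      qed
      have arr: "a \<in> arrays (4*t+3) (Xp \<union> Xm)"
        unfolding arrays_def a_def using fr by auto
      have "realizes (rho a) (Xp, Xm)" using real ra by simp
      then show ?thesis by (rule bexI[OF _ arr])
    qed
  qed
qed

end

theorem theorem2p2:
  fixes V :: "'a set" and E :: "('a \<times> 'a) set" and t :: nat
  assumes "t \<ge> 1"
    and "finite_graph V E"
    and "cliquewidth V E \<le> t"
  shows "\<exists>\<kappa> \<rho>. proper_array_sample_compression_scheme V (ball_hyperedges V E) (4 * t + 3) \<kappa> \<rho>"
proof -
  obtain k l where k: "k \<le> t" "cw_build k V E l" using cw_le[OF assms(2,3)] by blast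
  from cw_fam[OF k(2)] obtain NN lab where g: "goodfam k V E l NN lab" by blast
  have fg: "finite V" "V \<noteq> {}" "E \<subseteq> V \<times> V" "sym E" using assms(2) unfolding finite_graph_def by blast+
  have labt: "\<forall>N\<in>NN. lab N ` N \<subseteq> {1..t}"
  proof
    fix N assume N: "N \<in> NN"
    have "lab N ` N \<subseteq> {1..k}" using bspec[OF goodfamD(7)[OF g] N] by blast
    then show "lab N ` N \<subseteq> {1..t}" using k(1) by auto
  qed
  have tw: "\<forall>N\<in>NN. twinlab V E N (lab N)"
  proof
    fix N assume N: "N \<in> NN"
    show "twinlab V E N (lab N)" using bspec[OF goodfamD(7)[OF g] N] by blast
  qed
  interpret C: cwf V E NN lab t
    using fg goodfamD(1-6)[OF g] labt tw by unfold_locales simp_all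
  define \<kappa> where "\<kappa> = (\<lambda>X. SOME a. a \<in> arrays (4*t+3) (fst X \<union> snd X) \<and> realizes (C.rho a) X)"
  have P1: "\<forall>a\<in>arrays (4*t+3) V. C.rho a \<subseteq> V"
  proof
    fix a
    have "C.rho a \<in> ball_hyperedges V E" by (rule C.rho_hyper)
    then show "C.rho a \<subseteq> V" unfolding ball_hyperedges_def ball_def by blast
  qed
  have P2: "\<forall>X\<in>samples V (ball_hyperedges V E). \<kappa> X \<in> arrays (4*t+3) (fst X \<union> snd X) \<and> realizes (C.rho (\<kappa> X)) X"
  proof
    fix X assume X: "X \<in> samples V (ball_hyperedges V E)"
    obtain Xp Xm where XX: "X = (Xp, Xm)" by fastforce
    have "\<exists>a\<in>arrays (4*t+3) (Xp \<union> Xm). realizes (C.rho a) (Xp, Xm)" using C.compress X XX by blast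
    then have "\<exists>a. a \<in> arrays (4*t+3) (fst X \<union> snd X) \<and> realizes (C.rho a) X" using XX by (simp add: Bex_def)
    then show "\<kappa> X \<in> arrays (4*t+3) (fst X \<union> snd X) \<and> realizes (C.rho (\<kappa> X)) X"
      unfolding \<kappa>_def by (rule someI_ex)
  qed
  have P3: "\<forall>a\<in>arrays (4*t+3) V. C.rho a \<in> ball_hyperedges V E" using C.rho_hyper by blast
  have "proper_array_sample_compression_scheme V (ball_hyperedges V E) (4 * t + 3) \<kappa> C.rho"
    unfolding proper_array_sample_compression_scheme_def array_sample_compression_scheme_def
    using P1 P2 P3 by blast
  then show ?thesis by blast
qed

end
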